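(* Let $k$ be a field of characteristic zero, $S=k[x,y]$, let $a,b$ be positive integers and $J=(x^a,y^b)\subset S$, and let $I$ be a monomial ideal of $S$ with $J\subset I$. Then the graded $S$-module $I/J$ has the strong Lefschetz property.
   Context: $S$ is standard graded. A finite graded $S$-module $M=\bigoplus_i M_i$ has the strong Lefschetz property if there exists a linear form $\ell\in S_1$ such that the multiplication map $\times\ell^d\colon M_i\to M_{i+d}$ has maximal rank (is injective or surjective) for all $d>0$ and all $i$. *)

theory Defs
  imports "HOL-Library.Poly_Mapping" "HOL-Library.Product_Plus"
begin

text \<open>The polynomial ring S = k[x,y]: finitely supported functions from exponent
  pairs (i,j) (standing for the monomial x^i y^j) to k, with convolution product.\<close>

type_synonym 'k poly2 = "(nat \<times> nat) \<Rightarrow>\<^sub>0 'k"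

definition mono2 :: "nat \<Rightarrow> nat \<Rightarrow> 'k::comm_ring_1 poly2" where
  "mono2 i j = Poly_Mapping.single (i, j) 1"

definition varx :: "'k::comm_ring_1 poly2" where "varx = mono2 1 0"
definition vary :: "'k::comm_ring_1 poly2" where "vary = mono2 0 1"

definition homog :: "nat \<Rightarrow> 'k::comm_ring_1 poly2 set" where
  "homog n = {p. \<forall>(i, j) \<in> Poly_Mapping.keys p. i + j = n}"

definition ideal_gen :: "'k::comm_ring_1 poly2 set \<Rightarrow> 'k poly2 set" where
  "ideal_gen G = {p. \<exists>F c. finite F \<and> F \<subseteq> G \<and> p = (\<Sum>g\<in>F. c g * g)}"

definition monomial_ideal :: "'k::comm_ring_1 poly2 set \<Rightarrow> bool" where
  "monomial_ideal I \<longleftrightarrow> (\<exists>E. I = ideal_gen ((\<lambda>(i, j). mono2 i j) ` E))"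

text \<open>For ideals J \<subseteq> I, the graded module M = I/J has graded pieces
  M_n = (I \<inter> S_n)/(J \<inter> S_n).  Multiplication by ell^d : M_n \<rightarrow> M_(n+d) is injective
  resp. surjective, unfolded on representatives.\<close>
definition mult_inj :: "'k::comm_ring_1 poly2 set \<Rightarrow> 'k poly2 set \<Rightarrow> 'k poly2 \<Rightarrow> nat \<Rightarrow> nat \<Rightarrow> bool" where
  "mult_inj I J ell d n \<longleftrightarrow>
     (\<forall>f \<in> I \<inter> homog n. ell ^ d * f \<in> J \<longrightarrow> f \<in> J)"

definition mult_surj :: "'k::comm_ring_1 poly2 set \<Rightarrow> 'k poly2 set \<Rightarrow> 'k poly2 \<Rightarrow> nat \<Rightarrow> nat \<Rightarrow> bool" where
  "mult_surj I J ell d n \<longleftrightarrow>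
     (\<forall>g \<in> I \<inter> homog (n + d). \<exists>f \<in> I \<inter> homog n. g - ell ^ d * f \<in> J)"

definition strong_lefschetz_quot :: "'k::comm_ring_1 poly2 set \<Rightarrow> 'k poly2 set \<Rightarrow> bool" where
  "strong_lefschetz_quot I J \<longleftrightarrow>
     (\<exists>ell \<in> homog 1. \<forall>d > 0. \<forall>n. mult_inj I J ell d n \<or> mult_surj I J ell d n)"

end

theory Submission
  imports Defs "HOL-Computational_Algebra.Polynomial" "Jordan_Normal_Form.Determinant"
begin


lemma lookup_single_mult:
  fixes g :: "'k::comm_ring_1 poly2"
  shows "Poly_Mapping.lookup (Poly_Mapping.single (i,j) v * g) (c,e) =
     (if i \<le> c \<and> j \<le> e then v * Poly_Mapping.lookup g (c - i, e - j) else 0)"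
proof -
  have "Poly_Mapping.lookup (Poly_Mapping.single (i,j) v * g) (c,e) =
     (\<Sum>l. Poly_Mapping.lookup (Poly_Mapping.single (i,j) v) l * (\<Sum>q. Poly_Mapping.lookup g q when (c,e) = l + q))"
    by (rule lookup_mult)
  also have "\<dots> = (\<Sum>l. if (i,j) = l then v * (\<Sum>q. Poly_Mapping.lookup g q when (c,e) = l + q) else 0)"
    by (rule Sum_any.cong) (simp add: lookup_single when_def)
  also have "\<dots> = v * (\<Sum>q. Poly_Mapping.lookup g q when (c,e) = (i,j) + q)"
    by simp
  also have "(\<Sum>q. Poly_Mapping.lookup g q when (c,e) = (i,j) + q) = 
     (if i \<le> c \<and> j \<le> e then Poly_Mapping.lookup g (c - i, e - j) else 0)"
  proof (cases "i \<le> c \<and> j \<le> e")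
    case True
    have "(\<Sum>q. Poly_Mapping.lookup g q when (c,e) = (i,j) + q) = 
        (\<Sum>q. if q = (c - i, e - j) then Poly_Mapping.lookup g q else 0)"
      by (rule Sum_any.cong) (use True in \<open>auto simp: when_def\<close>)
    then show ?thesis using True by simp
  next
    case False
    have "(\<Sum>q. Poly_Mapping.lookup g q when (c,e) = (i,j) + q) = 0"
    proof -
      have "(\<lambda>q. Poly_Mapping.lookup g q when (c,e) = (i,j) + q) = (\<lambda>q. 0)"
        using False by (auto simp: fun_eq_iff when_def)
      then show ?thesis unfolding \<open>(\<lambda>q. Poly_Mapping.lookup g q when (c,e) = (i,j) + q) = (\<lambda>q. 0)\<close>
        using Sum_any.neutral by auto
    qed
    then show ?thesis using False by auto
  qed
  finally show ?thesis by simp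
qed


abbreviation lk :: "'k::comm_ring_1 poly2 \<Rightarrow> nat \<times> nat \<Rightarrow> 'k" where
  "lk \<equiv> Poly_Mapping.lookup"

lemma poly2_decomp:
  fixes p :: "'k::comm_ring_1 poly2"
  shows "p = (\<Sum>k\<in>Poly_Mapping.keys p. Poly_Mapping.single k (lk p k))"
proof (rule poly_mapping_eqI)
  fix k
  show "lk p k = lk (\<Sum>k\<in>Poly_Mapping.keys p. Poly_Mapping.single k (lk p k)) k"
  proof (cases "k \<in> Poly_Mapping.keys p")
    case True
    have "lk (\<Sum>k\<in>Poly_Mapping.keys p. Poly_Mapping.single k (lk p k)) k
        = (\<Sum>k'\<in>Poly_Mapping.keys p. if k' = k then lk p k' else 0)"
      by (simp add: lookup_sum lookup_single when_def)
    also have "\<dots> = lk p k" using True by (simp add: sum.delta)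
    finally show ?thesis by simp
  next
    case False
    have "lk (\<Sum>k\<in>Poly_Mapping.keys p. Poly_Mapping.single k (lk p k)) k
        = (\<Sum>k'\<in>Poly_Mapping.keys p. if k' = k then lk p k' else 0)"
      by (simp add: lookup_sum lookup_single when_def)
    also have "\<dots> = 0" using False by (simp add: sum.delta)
    finally show ?thesis using False by (simp add: in_keys_iff)
  qed
qed

lemma ideal_gen_zero: "0 \<in> ideal_gen G"
  unfolding ideal_gen_def by (rule CollectI, rule exI[of _ "{}"]) simp

lemma ideal_gen_gen: "g \<in> G \<Longrightarrow> s * g \<in> ideal_gen G"
  unfolding ideal_gen_def by (rule CollectI, rule exI[of _ "{g}"], rule exI[of _ "\<lambda>_. s"]) simp

lemma ideal_gen_add:
  assumes "p \<in> ideal_gen G" "q \<in> ideal_gen G"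
  shows "p + q \<in> ideal_gen G"
proof -
  obtain F1 c1 where F1: "finite F1" "F1 \<subseteq> G" "p = (\<Sum>g\<in>F1. c1 g * g)"
    using assms(1) unfolding ideal_gen_def by blast
  obtain F2 c2 where F2: "finite F2" "F2 \<subseteq> G" "q = (\<Sum>g\<in>F2. c2 g * g)"
    using assms(2) unfolding ideal_gen_def by blast
  define c where "c g = (if g \<in> F1 then c1 g else 0) + (if g \<in> F2 then c2 g else 0)" for g
  have "(\<Sum>g\<in>F1 \<union> F2. c g * g) = (\<Sum>g\<in>F1 \<union> F2. (if g \<in> F1 then c1 g * g else 0)
      + (if g \<in> F2 then c2 g * g else 0))"
    by (rule sum.cong) (auto simp: c_def distrib_right)
  also have "\<dots> = (\<Sum>g\<in>F1 \<union> F2. (if g \<in> F1 then c1 g * g else 0))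
      + (\<Sum>g\<in>F1 \<union> F2. (if g \<in> F2 then c2 g * g else 0))"
    by (rule sum.distrib)
  also have "(\<Sum>g\<in>F1 \<union> F2. (if g \<in> F1 then c1 g * g else 0)) = (\<Sum>g\<in>(F1 \<union> F2) \<inter> F1. c1 g * g)"
    using F1 F2 by (intro sum.inter_restrict[symmetric]) auto
  also have "(F1 \<union> F2) \<inter> F1 = F1" by blast
  also have "(\<Sum>g\<in>F1 \<union> F2. (if g \<in> F2 then c2 g * g else 0)) = (\<Sum>g\<in>(F1 \<union> F2) \<inter> F2. c2 g * g)"
    using F1 F2 by (intro sum.inter_restrict[symmetric]) auto
  also have "(F1 \<union> F2) \<inter> F2 = F2" by blast
  finally have "p + q = (\<Sum>g\<in>F1 \<union> F2. c g * g)" using F1 F2 by simp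
  then show ?thesis unfolding ideal_gen_def using F1 F2 by blast
qed

lemma ideal_gen_mult:
  assumes "p \<in> ideal_gen G"
  shows "s * p \<in> ideal_gen G"
proof -
  obtain F c where F: "finite F" "F \<subseteq> G" "p = (\<Sum>g\<in>F. c g * g)"
    using assms unfolding ideal_gen_def by blast
  have e: "s * p = (\<Sum>g\<in>F. (s * c g) * g)" using F by (simp add: sum_distrib_left mult.assoc)
  show ?thesis unfolding ideal_gen_def
    by (rule CollectI, rule exI[of _ F], rule exI[of _ "\<lambda>g. s * c g"]) (use F e in simp)
qed

lemma ideal_gen_sum:
  assumes "finite A" "\<And>x. x \<in> A \<Longrightarrow> f x \<in> ideal_gen G"
  shows "sum f A \<in> ideal_gen G"
  using assms by (induction A rule: finite_induct) (auto intro: ideal_gen_add ideal_gen_zero)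

lemma ideal_gen_diff:
  assumes "p \<in> ideal_gen G" "q \<in> ideal_gen G"
  shows "p - q \<in> ideal_gen G"
proof -
  have "p + (- 1) * q \<in> ideal_gen G" using assms by (intro ideal_gen_add ideal_gen_mult)
  then show ?thesis by simp
qed

definition upE :: "(nat \<times> nat) set \<Rightarrow> nat \<times> nat \<Rightarrow> bool" where
  "upE E k \<longleftrightarrow> (\<exists>e\<in>E. fst e \<le> fst k \<and> snd e \<le> snd k)"

lemma mono_ideal_keys:
  fixes p :: "'k::comm_ring_1 poly2"
  assumes "p \<in> ideal_gen ((\<lambda>(i, j). mono2 i j) ` E)" "k \<in> Poly_Mapping.keys p"
  shows "upE E k"
proof -
  obtain F c where F: "finite F" "F \<subseteq> (\<lambda>(i, j). mono2 i j) ` E" "p = (\<Sum>g\<in>F. c g * g)"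
    using assms(1) unfolding ideal_gen_def by blast
  have "lk p k = (\<Sum>g\<in>F. lk (c g * g) k)" using F by (simp add: lookup_sum)
  moreover have "lk p k \<noteq> 0" using assms(2) by (simp add: in_keys_iff)
  ultimately have "(\<Sum>g\<in>F. lk (c g * g) k) \<noteq> 0" by simp
  then obtain g where g: "g \<in> F" "lk (c g * g) k \<noteq> 0"
    by (rule sum.not_neutral_contains_not_neutral)
  obtain e1 e2 where e: "(e1, e2) \<in> E" "g = mono2 e1 e2" using g F by auto
  obtain k1 k2 where k: "k = (k1, k2)" by (cases k)
  have "lk (Poly_Mapping.single (e1, e2) 1 * c g) (k1, k2) \<noteq> 0"
    using g e k by (simp add: mono2_def mult.commute)
  then have "e1 \<le> k1 \<and> e2 \<le> k2" by (simp add: lookup_single_mult split: if_splits)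
  then show ?thesis unfolding upE_def using e k by force
qed

lemma single_in_mono_ideal:
  assumes "upE E k"
  shows "(Poly_Mapping.single k v :: 'k::comm_ring_1 poly2) \<in> ideal_gen ((\<lambda>(i, j). mono2 i j) ` E)"
proof -
  obtain e1 e2 where e: "(e1,e2) \<in> E" "e1 \<le> fst k" "e2 \<le> snd k" using assms unfolding upE_def by force
  obtain k1 k2 where k: "k = (k1, k2)" by (cases k)
  have "Poly_Mapping.single k v = Poly_Mapping.single (k1 - e1, k2 - e2) v * (mono2 e1 e2 :: 'k poly2)"
    using e k by (simp add: mono2_def mult_single)
  then show ?thesis using e by (auto intro!: ideal_gen_gen)
qed

lemma mono_ideal_iff:
  fixes p :: "'k::comm_ring_1 poly2"
  shows "p \<in> ideal_gen ((\<lambda>(i, j). mono2 i j) ` E) \<longleftrightarrow> (\<forall>k\<in>Poly_Mapping.keys p. upE E k)"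
proof
  assume "p \<in> ideal_gen ((\<lambda>(i, j). mono2 i j) ` E)"
  then show "\<forall>k\<in>Poly_Mapping.keys p. upE E k" using mono_ideal_keys by blast
next
  assume H: "\<forall>k\<in>Poly_Mapping.keys p. upE E k"
  have "(\<Sum>k\<in>Poly_Mapping.keys p. Poly_Mapping.single k (lk p k)) \<in> ideal_gen ((\<lambda>(i, j). mono2 i j) ` E)"
    using H by (intro ideal_gen_sum) (auto intro: single_in_mono_ideal)
  then show "p \<in> ideal_gen ((\<lambda>(i, j). mono2 i j) ` E)" using poly2_decomp[of p] by simp
qed

lemma single00: "Poly_Mapping.single (0,0) 1 = (1 :: 'k::comm_ring_1 poly2)"
proof -
  have "(0::nat\<times>nat) = (0,0)" by (simp add: zero_prod_def)
  then show ?thesis by (metis single_one)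
qed

lemma mono2_pow_x: "(varx :: 'k::comm_ring_1 poly2) ^ n = mono2 n 0"
  by (induction n) (simp_all add: single00 varx_def mono2_def mult_single)

lemma mono2_pow_y: "(vary :: 'k::comm_ring_1 poly2) ^ n = mono2 0 n"
  by (induction n) (simp_all add: single00 vary_def mono2_def mult_single)



definition binc :: "nat \<Rightarrow> nat \<Rightarrow> nat \<Rightarrow> nat" where
  "binc d c i = (if i \<le> c then d choose (c - i) else 0)"

lemma homog_lookup:
  assumes "f \<in> homog n" "lk f (i, j) \<noteq> 0"
  shows "i + j = n"
  using assms unfolding homog_def by (auto simp: in_keys_iff)

lemma lookup_varx_mult:
  fixes g :: "'k::comm_ring_1 poly2"
  shows "lk (varx * g) (c, e) = (if 1 \<le> c then lk g (c - 1, e) else 0)"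
  unfolding varx_def mono2_def by (simp add: lookup_single_mult)

lemma lookup_vary_mult:
  fixes g :: "'k::comm_ring_1 poly2"
  shows "lk (vary * g) (c, e) = (if 1 \<le> e then lk g (c, e - 1) else 0)"
  unfolding vary_def mono2_def by (simp add: lookup_single_mult)

lemma binc_pascal:
  assumes "c + e = n + Suc d" "i \<le> n"
  shows "binc (Suc d) c i = (if 1 \<le> c then binc d (c - 1) i else 0) + (if 1 \<le> e then binc d c i else 0)"
proof (cases "i \<le> c")
  case False
  then show ?thesis by (auto simp: binc_def)
next
  case True
  show ?thesis
  proof (cases "e = 0")
    case True
    then have "c = n + Suc d" using assms by simp
    then have "d < c - i" using assms by simp
    moreover have "binc (Suc d) c i = binc d (c - 1) i"
    proof (cases "i = c")
      case True then show ?thesis using \<open>d < c - i\<close> by simp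
    next
      case False
      then have "c - i = Suc (c - 1 - i)" using \<open>i \<le> c\<close> by simp
      then show ?thesis using \<open>i \<le> c\<close> False \<open>d < c - i\<close>
        by (simp add: binc_def binomial_eq_0)
    qed
    ultimately show ?thesis using True \<open>c = n + Suc d\<close> by simp
  next
    case False
    show ?thesis
    proof (cases "i = c")
      case True
      then show ?thesis using False by (auto simp: binc_def)
    next
      case ne: False
      then have "c - i = Suc (c - 1 - i)" "1 \<le> c" "i \<le> c - 1" using \<open>i \<le> c\<close> by auto
      then show ?thesis using False \<open>i \<le> c\<close> by (simp add: binc_def)
    qed
  qed
qed

lemma coef_lemma:
  fixes f :: "'k::comm_ring_1 poly2"
  assumes "f \<in> homog n"
  shows "lk ((varx + vary) ^ d * f) (c, e) =
     (if c + e = n + d then (\<Sum>i\<le>n. lk f (i, n - i) * of_nat (binc d c i)) else 0)"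
proof (induction d arbitrary: c e)
  case 0
  show ?case
  proof (cases "c + e = n")
    case True
    have "(\<Sum>i\<le>n. lk f (i, n - i) * of_nat (binc 0 c i)) = (\<Sum>i\<le>n. if i = c then lk f (i, n - i) else 0)"
      by (rule sum.cong) (auto simp: binc_def binomial_eq_0)
    also have "\<dots> = lk f (c, n - c)" using True by (simp add: sum.delta)
    moreover have "e = n - c" using True by simp
    ultimately show ?thesis using True by simp
  next
    case False
    then have "lk f (c, e) = 0" using homog_lookup[OF assms] by blast
    then show ?thesis using False by simp
  qed
next
  case (Suc d)
  let ?g = "(varx + vary) ^ d * f"
  have eq: "(varx + vary) ^ Suc d * f = varx * ?g + vary * ?g"
    by (simp add: algebra_simps)
  have "lk ((varx + vary) ^ Suc d * f) (c, e) =
      (if 1 \<le> c then lk ?g (c - 1, e) else 0) + (if 1 \<le> e then lk ?g (c, e - 1) else 0)"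
    unfolding eq lookup_add lookup_varx_mult lookup_vary_mult by simp
  also have "\<dots> = (if c + e = n + Suc d then (\<Sum>i\<le>n. lk f (i, n - i) * of_nat (binc (Suc d) c i)) else 0)"
  proof (cases "c + e = n + Suc d")
    case True
    have "(\<Sum>i\<le>n. lk f (i, n - i) * of_nat (binc (Suc d) c i)) =
        (\<Sum>i\<le>n. lk f (i, n - i) * of_nat (if 1 \<le> c then binc d (c - 1) i else 0)) +
        (\<Sum>i\<le>n. lk f (i, n - i) * of_nat (if 1 \<le> e then binc d c i else 0))"
      by (simp add: binc_pascal[OF True] distrib_left sum.distrib)
    also have "(\<Sum>i\<le>n. lk f (i, n - i) * of_nat (if 1 \<le> c then binc d (c - 1) i else 0)) =
        (if 1 \<le> c then lk ?g (c - 1, e) else 0)"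
      using True by (cases "1 \<le> c") (simp_all add: Suc.IH)
    also have "(\<Sum>i\<le>n. lk f (i, n - i) * of_nat (if 1 \<le> e then binc d c i else 0)) =
        (if 1 \<le> e then lk ?g (c, e - 1) else 0)"
      using True by (cases "1 \<le> e") (simp_all add: Suc.IH)
    finally show ?thesis using True by simp
  next
    case False
    then show ?thesis by (auto simp: Suc.IH)
  qed
  finally show ?case .
qed



definition ffn :: "nat \<Rightarrow> nat \<Rightarrow> nat" where
  "ffn x k = (\<Prod>r<k. (x - r))"

lemma ffn_0 [simp]: "ffn x 0 = 1" by (simp add: ffn_def)

lemma ffn_Suc: "ffn x (Suc k) = ffn x k * (x - k)"
  by (simp add: ffn_def)

lemma ffn_zero: "x < k \<Longrightarrow> ffn x k = 0"
  unfolding ffn_def by (rule prod_zero) auto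

lemma ffn_fact: "k \<le> x \<Longrightarrow> fact (x - k) * ffn x k = (fact x :: nat)"
proof (induction k)
  case 0 then show ?case by simp
next
  case (Suc k)
  have "x - k = Suc (x - Suc k)" using Suc.prems by simp
  then have "fact (x - k) = (x - k) * (fact (x - Suc k) :: nat)" by simp
  then show ?case using Suc by (simp add: ffn_Suc algebra_simps)
qed

lemma weight_id:
  assumes "u + v = d + k + l"
  shows "(if k \<le> u then d choose (u - k) else 0) * fact u * fact v = fact d * ffn u k * (ffn v l :: nat)"
proof (cases "k \<le> u")
  case False then show ?thesis by (simp add: ffn_zero)
next
  case ku: True
  show ?thesis
  proof (cases "l \<le> v")
    case False
    then have "d < u - k" using assms ku by simp
    then show ?thesis using False ku by (simp add: ffn_zero binomial_eq_0)
  next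
    case True
    define p where "p = u - k"
    define q where "q = v - l"
    have pq: "p + q = d" using assms ku True by (simp add: p_def q_def)
    have b: "fact p * fact (d - p) * (d choose p) = (fact d :: nat)"
      using pq by (intro binomial_fact_lemma) simp
    have fu: "fact p * ffn u k = (fact u :: nat)" unfolding p_def using ku by (rule ffn_fact)
    have fv: "fact q * ffn v l = (fact v :: nat)" unfolding q_def using True by (rule ffn_fact)
    have "((d choose p) * fact u * fact v) * (fact p * fact q) = (fact d * ffn u k * ffn v l) * ((fact p * fact q) :: nat)"
    proof -
      have "((d choose p) * fact u * fact v) * (fact p * fact q) = (fact p * fact q * (d choose p)) * fact u * fact v"
        by (simp add: algebra_simps)
      also have "fact p * fact q * (d choose p) = (fact d :: nat)"
      proof -
        have "d - p = q" using pq by simp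
        then show ?thesis using b by simp
      qed
      also have "fact d * fact u * fact v = fact d * (fact p * ffn u k) * (fact q * ffn v l)" using fu fv by simp
      finally show ?thesis by (simp add: algebra_simps)
    qed
    moreover have "fact p * fact q \<noteq> (0::nat)" by simp
    ultimately have "(d choose p) * fact u * fact v = fact d * ffn u k * (ffn v l :: nat)"
      by (metis mult_right_cancel)
    then show ?thesis using ku by (simp add: p_def)
  qed
qed

lemma euler_id:
  assumes "u + v = T"
  shows "ffn u (Suc k) * ffn v l + ffn u k * ffn v (Suc l) = (T - k - l) * (ffn u k * ffn v l)"
proof (cases "k \<le> u \<and> l \<le> v")
  case True
  then have "(u - k) + (v - l) = T - k - l" using assms by simp
  have "ffn u (Suc k) * ffn v l + ffn u k * ffn v (Suc l) = (ffn u k * ffn v l) * ((u - k) + (v - l))"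
    by (simp add: ffn_Suc algebra_simps)
  then show ?thesis using \<open>(u - k) + (v - l) = T - k - l\<close> by (simp add: mult.commute)
next
  case False
  then show ?thesis by (auto simp: ffn_Suc ffn_zero)
qed

definition FFp :: "nat \<Rightarrow> 'k::comm_ring_1 poly" where
  "FFp k = (\<Prod>r<k. [:- of_nat r, 1:])"

lemma poly_FFp: "poly (FFp k) (of_nat x :: 'k::comm_ring_1) = of_nat (ffn x k)"
proof (induction k)
  case 0 then show ?case by (simp add: FFp_def)
next
  case (Suc k)
  have "poly (FFp (Suc k)) (of_nat x :: 'k) = poly (FFp k) (of_nat x) * (of_nat x - of_nat k)"
    by (simp add: FFp_def algebra_simps)
  also have "\<dots> = of_nat (ffn x (Suc k))"
  proof (cases "k \<le> x")
    case True then show ?thesis using Suc by (simp add: ffn_Suc of_nat_diff)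
  next
    case False
    then have "ffn x k = 0" by (simp add: ffn_zero)
    then show ?thesis using Suc by (simp add: ffn_Suc)
  qed
  finally show ?case .
qed

lemma degree_FFp: "degree (FFp k :: 'k::idom poly) = k"
  unfolding FFp_def by (subst degree_prod_sum_eq) auto

lemma lead_FFp: "coeff (FFp k :: 'k::idom poly) k = 1"
proof -
  have "coeff (FFp k :: 'k poly) k = lead_coeff (FFp k :: 'k poly)" by (simp add: degree_FFp)
  also have "\<dots> = 1" unfolding FFp_def lead_coeff_prod by simp
  finally show ?thesis .
qed

lemma vand:
  fixes lam :: "nat \<Rightarrow> 'k::field_char_0"
  assumes fin: "finite R" and inj: "inj_on u R" and uv: "\<forall>i\<in>R. u i + v i = T"
    and card: "card R \<le> M" and MT: "M \<le> T"
    and eqs: "\<forall>k<M. (\<Sum>i\<in>R. lam i * of_nat (ffn (u i) k * ffn (v i) (M - 1 - k))) = 0"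
  shows "\<forall>i\<in>R. lam i = 0"
proof (cases "R = {}")
  case True then show ?thesis by simp
next
  case False
  then have M1: "1 \<le> M" using card fin by (metis One_nat_def Suc_leI card_gt_0_iff le_trans)
  define S where "S k l = (\<Sum>i\<in>R. lam i * of_nat (ffn (u i) k * ffn (v i) l))" for k l
  have euler: "of_nat (T - k - l) * S k l = S (Suc k) l + S k (Suc l)" for k l
  proof -
    have "of_nat (T - k - l) * S k l = (\<Sum>i\<in>R. lam i * of_nat ((T - k - l) * (ffn (u i) k * ffn (v i) l)))"
      unfolding S_def by (simp add: sum_distrib_left of_nat_mult mult_ac)
    also have "\<dots> = (\<Sum>i\<in>R. lam i * of_nat (ffn (u i) (Suc k) * ffn (v i) l) + lam i * of_nat (ffn (u i) k * ffn (v i) (Suc l)))"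
    proof (rule sum.cong)
      fix i assume "i \<in> R"
      then have "(T - k - l) * (ffn (u i) k * ffn (v i) l) = ffn (u i) (Suc k) * ffn (v i) l + ffn (u i) k * ffn (v i) (Suc l)"
        using euler_id[of "u i" "v i" T k l] uv by simp
      then show "lam i * of_nat ((T - k - l) * (ffn (u i) k * ffn (v i) l)) =
          lam i * of_nat (ffn (u i) (Suc k) * ffn (v i) l) + lam i * of_nat (ffn (u i) k * ffn (v i) (Suc l))"
        by (simp add: distrib_left)
    qed simp
    also have "\<dots> = S (Suc k) l + S k (Suc l)" unfolding S_def by (simp add: sum.distrib)
    finally show ?thesis .
  qed
  have down: "\<forall>k l. k + l = M - 1 - t \<longrightarrow> S k l = 0" for t
  proof (induction t)
    case 0
    show ?case
    proof (intro allI impI)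
      fix k l assume "k + l = M - 1 - 0"
      then have "k < M" "l = M - 1 - k" using M1 by auto
      then show "S k l = 0" using eqs unfolding S_def by simp
    qed
  next
    case (Suc t)
    show ?case
    proof (cases "M - 1 \<le> t")
      case True
      then have "M - 1 - Suc t = M - 1 - t" by simp
      then show ?thesis using Suc.IH by simp
    next
      case False
      show ?thesis
      proof (intro allI impI)
        fix k l assume kl: "k + l = M - 1 - Suc t"
        then have "Suc k + l = M - 1 - t" "k + Suc l = M - 1 - t" using False by auto
        then have "S (Suc k) l = 0" "S k (Suc l) = 0" using Suc.IH by auto
        then have "of_nat (T - k - l) * S k l = 0" using euler by simp
        moreover have "T - k - l \<noteq> 0" using kl False MT M1 by simp
        then have "(of_nat (T - k - l) :: 'k) \<noteq> 0" by (simp only: of_nat_eq_0_iff not_False_eq_True)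
        ultimately show "S k l = 0" by (metis mult_eq_0_iff)
      qed
    qed
  qed
  have Sj: "S j 0 = 0" if "j < M" for j
    using down[of "M - 1 - j"] that by simp
  define Phi where "Phi P = (\<Sum>i\<in>R. lam i * poly P (of_nat (u i)))" for P :: "'k poly"
  have Phi_FF: "Phi (FFp j) = 0" if "j < M" for j
    using Sj[OF that] unfolding Phi_def S_def by (simp add: poly_FFp)
  have Phi0: "degree P < M \<Longrightarrow> Phi P = 0" for P
  proof (induction "degree P" arbitrary: P rule: less_induct)
    case less
    define n where "n = degree P"
    define Q where "Q = P - smult (coeff P n) (FFp n)"
    have PQ: "Phi P = Phi Q + coeff P n * Phi (FFp n)"
      unfolding Phi_def Q_def by (simp add: sum.distrib[symmetric] sum_distrib_left algebra_simps)
    have "Phi (FFp n) = 0" using less.prems Phi_FF n_def by simp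
    moreover have "Phi Q = 0"
    proof (cases "n = 0")
      case True
      then have "degree P = 0" using n_def by simp
      then obtain a where "P = [:a:]" by (rule degree_eq_zeroE)
      then have "Q = 0" unfolding Q_def FFp_def using True by simp
      then show ?thesis unfolding Phi_def by simp
    next
      case False
      have "\<forall>i>n - 1. coeff Q i = 0"
      proof (intro allI impI)
        fix i assume "n - 1 < i"
        then have "n \<le> i" using False by simp
        show "coeff Q i = 0"
        proof (cases "i = n")
          case True then show ?thesis unfolding Q_def by (simp add: lead_FFp)
        next
          case False
          then have "n < i" using \<open>n \<le> i\<close> by simp
          then show ?thesis unfolding Q_def using n_def
            by (simp add: coeff_eq_0 degree_FFp)
        qed
      qed
      then have "degree Q \<le> n - 1" by (rule degree_le)
      then have "degree Q < degree P" using False n_def by simp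
      moreover have "degree Q < M" using calculation less.prems by simp
      ultimately show ?thesis using less.hyps by blast
    qed
    ultimately show ?case using PQ by simp
  qed
  show ?thesis
  proof
    fix i0 assume i0: "i0 \<in> R"
    define P where "P = (\<Prod>i\<in>R - {i0}. [:- of_nat (u i), 1:] :: 'k poly)"
    have "degree P = card (R - {i0})" unfolding P_def by (subst degree_prod_sum_eq) auto
    also have "\<dots> < M"
    proof -
      have "card R > 0" using i0 fin card_gt_0_iff by blast
      moreover have "card (R - {i0}) = card R - 1" using i0 fin by (simp add: card_Diff_singleton)
      ultimately show ?thesis using card by linarith
    qed
    finally have "Phi P = 0" by (rule Phi0)
    moreover have "Phi P = lam i0 * poly P (of_nat (u i0))"
    proof -
      have "Phi P = (\<Sum>i\<in>R. if i = i0 then lam i * poly P (of_nat (u i)) else 0)"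
        unfolding Phi_def
      proof (rule sum.cong)
        fix i assume i: "i \<in> R"
        show "lam i * poly P (of_nat (u i)) = (if i = i0 then lam i * poly P (of_nat (u i)) else 0)"
        proof (cases "i = i0")
          case False
          then have "poly P (of_nat (u i)) = 0" unfolding P_def poly_prod
            using i fin by (intro prod_zero) auto
          then show ?thesis using False by simp
        qed simp
      qed simp
      then show ?thesis using i0 fin by (simp add: sum.delta)
    qed
    moreover have "poly P (of_nat (u i0)) \<noteq> 0"
    proof -
      have "\<forall>i\<in>R - {i0}. poly [:- of_nat (u i), 1:] (of_nat (u i0) :: 'k) \<noteq> 0"
      proof
        fix i assume i: "i \<in> R - {i0}"
        then have "u i \<noteq> u i0" using inj i0 unfolding inj_on_def by blast
        then show "poly [:- of_nat (u i), 1:] (of_nat (u i0) :: 'k) \<noteq> 0" by simp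
      qed
      then show ?thesis unfolding P_def poly_prod using fin by (simp add: prod_zero_iff)
    qed
    ultimately show "lam i0 = 0" by simp
  qed
qed





lemma inj_core:
  fixes phi :: "nat \<Rightarrow> 'k::field_char_0"
  assumes d: "0 < d" and fin: "finite R" and win: "\<forall>i\<in>R. i \<le> n \<and> i < a \<and> n < i + b"
    and card: "card R + (n + d) < a + b"
    and eqs: "\<forall>c. c \<le> n + d \<and> c < a \<and> n + d < c + b \<longrightarrow> (\<Sum>i\<in>R. phi i * of_nat (binc d c i)) = 0"
  shows "\<forall>i\<in>R. phi i = 0"
proof (cases "R = {}")
  case True then show ?thesis by simp
next
  case False
  then obtain i1 where i1: "i1 \<in> R" by blast
  define N where "N = n + d"
  define M where "M = a + b - 1 - N"
  define T where "T = a + b - 2 - n"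
  define u where "u i = a - 1 - i" for i
  define v where "v i = i + b - 1 - n" for i
  define lam where "lam i = phi i / of_nat (fact (u i) * fact (v i))" for i
  have ab: "n + 2 \<le> a + b" using win i1 by fastforce
  have cardM: "card R \<le> M" using card unfolding M_def N_def by simp
  have MT: "M \<le> T" using d ab unfolding M_def T_def N_def by simp
  have cR: "1 \<le> card R" using i1 fin by (simp add: Suc_le_eq card_gt_0_iff) blast
  have M1: "1 \<le> M" using cR card unfolding M_def N_def by simp
  have TM: "T = d + M - 1" using M1 ab unfolding M_def T_def N_def by simp
  have uv: "\<forall>i\<in>R. u i + v i = T" using win unfolding u_def v_def T_def by fastforce
  have inj: "inj_on u R"
  proof (rule inj_onI)
    fix x y assume "x \<in> R" "y \<in> R" "u x = u y"
    then show "x = y" using win unfolding u_def by (metis diff_diff_cancel less_Suc_eq_le Suc_pred' not_less0 le_less_trans zero_less_iff_neq_zero)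
  qed
  have eqs2: "\<forall>k<M. (\<Sum>i\<in>R. lam i * of_nat (ffn (u i) k * ffn (v i) (M - 1 - k))) = 0"
  proof (intro allI impI)
    fix k assume k: "k < M"
    define l where "l = M - 1 - k"
    have trm: "of_nat (fact d) * (lam i * of_nat (ffn (u i) k * ffn (v i) l)) =
        phi i * of_nat (if k \<le> u i then d choose (u i - k) else 0)" if i: "i \<in> R" for i
    proof -
      have "u i + v i = d + k + l" using uv i TM M1 k unfolding l_def by simp
      then have w: "(if k \<le> u i then d choose (u i - k) else 0) * fact (u i) * fact (v i) =
          fact d * ffn (u i) k * (ffn (v i) l :: nat)" by (rule weight_id)
      have nz: "(of_nat (fact (u i) * fact (v i)) :: 'k) \<noteq> 0" by (simp only: of_nat_eq_0_iff) simp
      have "of_nat (fact d) * (lam i * of_nat (ffn (u i) k * ffn (v i) l)) =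
          phi i * of_nat (fact d * ffn (u i) k * ffn (v i) l) / of_nat (fact (u i) * fact (v i))"
        unfolding lam_def by (simp add: of_nat_mult)
      also have "\<dots> = phi i * of_nat ((if k \<le> u i then d choose (u i - k) else 0) * (fact (u i) * fact (v i))) / of_nat (fact (u i) * fact (v i))"
        using w by (simp add: mult.assoc)
      also have "\<dots> = phi i * of_nat (if k \<le> u i then d choose (u i - k) else 0)"
        using nz by (simp only: of_nat_mult[of "if k \<le> u i then d choose (u i - k) else 0"]) simp
      finally show ?thesis .
    qed
    have "of_nat (fact d) * (\<Sum>i\<in>R. lam i * of_nat (ffn (u i) k * ffn (v i) l)) = 0"
    proof (cases "k < a \<and> a - 1 - k \<le> N")
      case True
      define c where "c = a - 1 - k"
      have cvalid: "c \<le> n + d \<and> c < a \<and> n + d < c + b"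
        using True k unfolding c_def M_def N_def by auto
      have "of_nat (fact d) * (\<Sum>i\<in>R. lam i * of_nat (ffn (u i) k * ffn (v i) l)) =
          (\<Sum>i\<in>R. phi i * of_nat (binc d c i))"
        unfolding sum_distrib_left
      proof (rule sum.cong)
        fix i assume i: "i \<in> R"
        have "(if k \<le> u i then d choose (u i - k) else 0) = binc d c i"
          using win i True unfolding binc_def c_def u_def by (auto simp: add.commute)
        then show "of_nat (fact d) * (lam i * of_nat (ffn (u i) k * ffn (v i) l)) = phi i * of_nat (binc d c i)"
          using trm[OF i] by simp
      qed simp
      also have "\<dots> = 0" using eqs cvalid by blast
      finally show ?thesis .
    next
      case False
      have "\<forall>i\<in>R. ffn (u i) k * ffn (v i) l = 0"
      proof
        fix i assume i: "i \<in> R"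
        show "ffn (u i) k * ffn (v i) l = 0"
        proof (cases "k < a")
          case False
          then have "u i < k" using win i unfolding u_def by auto
          then show ?thesis by (simp add: ffn_zero)
        next
          case True
          then have "N < a - 1 - k" using \<open>\<not> (k < a \<and> a - 1 - k \<le> N)\<close> by simp
          then have "v i < l" using win i k unfolding v_def l_def M_def N_def by auto
          then show ?thesis by (simp add: ffn_zero)
        qed
      qed
      then show ?thesis by (simp add: sum.neutral)
    qed
    moreover have "(of_nat (fact d) :: 'k) \<noteq> 0" by (simp only: of_nat_eq_0_iff) simp
    ultimately show "(\<Sum>i\<in>R. lam i * of_nat (ffn (u i) k * ffn (v i) (M - 1 - k))) = 0"
      unfolding l_def by simp
  qed
  have "\<forall>i\<in>R. lam i = 0" by (rule vand[OF fin inj uv cardM MT eqs2])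
  then show ?thesis unfolding lam_def by simp
qed



lemma mulv_expand:
  fixes f :: "nat \<times> nat \<Rightarrow> 'k::comm_ring_1"
  assumes "v \<in> carrier_vec K" "x < K"
  shows "(mat K K f *\<^sub>v v) $ x = (\<Sum>y<K. f (x, y) * v $ y)"
  using assms by (simp add: scalar_prod_def lessThan_atLeast0)

lemma square_solve:
  fixes m :: "nat \<Rightarrow> nat \<Rightarrow> 'k::field"
  assumes finR: "finite R" and finC: "finite C" and cardRC: "card R = card C"
    and inj: "\<forall>\<phi>. (\<forall>c\<in>C. (\<Sum>r\<in>R. m c r * \<phi> r) = 0) \<longrightarrow> (\<forall>r\<in>R. \<phi> r = 0)"
  shows "\<exists>\<phi>. \<forall>c\<in>C. (\<Sum>r\<in>R. m c r * \<phi> r) = \<psi> c"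
proof -
  define K where "K = card R"
  obtain \<rho> where rho: "bij_betw \<rho> {0..<K} R" using ex_bij_betw_nat_finite[OF finR] K_def by blast
  obtain \<gamma> where gam: "bij_betw \<gamma> {0..<K} C" using ex_bij_betw_nat_finite[OF finC] K_def cardRC by auto
  define A where "A = mat K K (\<lambda>(x, y). m (\<gamma> x) (\<rho> y))"
  have A: "A \<in> carrier_mat K K" unfolding A_def by simp
  define ri where "ri = inv_into {0..<K} \<rho>"
  have ri: "\<And>y. y < K \<Longrightarrow> ri (\<rho> y) = y" unfolding ri_def using rho
    by (simp add: bij_betw_def inv_into_f_f)
  have sumR: "(\<Sum>r\<in>R. g r) = (\<Sum>y<K. g (\<rho> y))" for g :: "nat \<Rightarrow> 'k"
    using sum.reindex_bij_betw[OF rho, of g] by (simp add: lessThan_atLeast0)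
  have key: "(\<Sum>r\<in>R. m (\<gamma> x) r * v $ ri r) = (A *\<^sub>v v) $ x" if "v \<in> carrier_vec K" "x < K" for v x
  proof -
    have "(\<Sum>r\<in>R. m (\<gamma> x) r * v $ ri r) = (\<Sum>y<K. m (\<gamma> x) (\<rho> y) * v $ ri (\<rho> y))" by (rule sumR)
    also have "\<dots> = (\<Sum>y<K. m (\<gamma> x) (\<rho> y) * v $ y)" by (rule sum.cong) (auto simp: ri)
    also have "\<dots> = (A *\<^sub>v v) $ x"
      using mulv_expand[OF that, of "\<lambda>(x, y). m (\<gamma> x) (\<rho> y)"] unfolding A_def by simp
    finally show ?thesis .
  qed
  have gC: "\<And>c. c \<in> C \<Longrightarrow> \<exists>x<K. c = \<gamma> x" using gam unfolding bij_betw_def by auto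
  have "det A \<noteq> 0"
  proof
    assume "det A = 0"
    then obtain v where v: "v \<in> carrier_vec K" "v \<noteq> 0\<^sub>v K" "A *\<^sub>v v = 0\<^sub>v K"
      using det_0_iff_vec_prod_zero[OF A] by blast
    define \<phi> where "\<phi> r = v $ ri r" for r
    have "\<forall>c\<in>C. (\<Sum>r\<in>R. m c r * \<phi> r) = 0"
    proof
      fix c assume "c \<in> C"
      then obtain x where x: "x < K" "c = \<gamma> x" using gC by blast
      show "(\<Sum>r\<in>R. m c r * \<phi> r) = 0" unfolding \<phi>_def x(2) key[OF v(1) x(1)] using v x by simp
    qed
    then have z: "\<forall>r\<in>R. \<phi> r = 0" using inj by blast
    have "v = 0\<^sub>v K"
    proof (rule eq_vecI)
      fix y assume "y < dim_vec (0\<^sub>v K :: 'k vec)"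
      then have y: "y < K" by simp
      then have "\<rho> y \<in> R" using rho unfolding bij_betw_def by auto
      then show "v $ y = 0\<^sub>v K $ y" using z y ri unfolding \<phi>_def by fastforce
    qed (use v in simp)
    then show False using v by simp
  qed
  then have "A \<in> Units (ring_mat TYPE('k) K ())" by (rule det_non_zero_imp_unit[OF A])
  then obtain B where B: "B \<in> carrier_mat K K" "A * B = 1\<^sub>m K"
    unfolding Units_def ring_mat_def by auto
  define w where "w = vec K (\<lambda>x. \<psi> (\<gamma> x))"
  define v where "v = B *\<^sub>v w"
  have v: "v \<in> carrier_vec K" unfolding v_def w_def using B by simp
  have Av: "A *\<^sub>v v = w" unfolding v_def using A B by (simp add: assoc_mult_mat_vec[symmetric] w_def)
  show ?thesis
  proof (intro exI ballI)
    fix c assume "c \<in> C"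
    then obtain x where x: "x < K" "c = \<gamma> x" using gC by blast
    show "(\<Sum>r\<in>R. m c r * v $ ri r) = \<psi> c" unfolding x(2) key[OF v x(1)] Av w_def using x by simp
  qed
qed


theorem theorem3p1:
  fixes I :: "'k::field_char_0 poly2 set" and a b :: nat
  assumes "a > 0" and "b > 0"
    and "monomial_ideal I"
    and "ideal_gen {varx ^ a, vary ^ b} \<subseteq> I"
  shows "strong_lefschetz_quot I (ideal_gen {varx ^ a, vary ^ b})"
proof -
  let ?J = "ideal_gen {varx ^ a, vary ^ b} :: 'k poly2 set"
  obtain E where E: "I = ideal_gen ((\<lambda>(i, j). mono2 i j) ` E)"
    using assms(3) unfolding monomial_ideal_def by blast
  have Jeq: "?J = ideal_gen ((\<lambda>(i, j). mono2 i j) ` {(a, 0), (0, b)})"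
    by (simp add: mono2_pow_x mono2_pow_y)
  have memJ: "p \<in> ?J \<longleftrightarrow> (\<forall>k\<in>Poly_Mapping.keys p. a \<le> fst k \<or> b \<le> snd k)" for p :: "'k poly2"
    unfolding Jeq mono_ideal_iff upE_def by auto
  have memI: "p \<in> I \<longleftrightarrow> (\<forall>k\<in>Poly_Mapping.keys p. upE E k)" for p :: "'k poly2"
    unfolding E by (rule mono_ideal_iff)
  define ell :: "'k poly2" where "ell = varx + vary"
  have hom1: "ell \<in> homog 1"
  proof -
    have "Poly_Mapping.keys ell \<subseteq> Poly_Mapping.keys (varx :: 'k poly2) \<union> Poly_Mapping.keys (vary :: 'k poly2)"
      unfolding ell_def by (rule keys_add)
    also have "\<dots> \<subseteq> {(1, 0), (0, 1)}" by (simp add: varx_def vary_def mono2_def)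
    finally show ?thesis unfolding homog_def by auto
  qed
  show ?thesis unfolding strong_lefschetz_quot_def
  proof (intro bexI[of _ ell] allI impI hom1)
    fix d n :: nat assume d: "0 < d"
    define U where "U = {i. i \<le> n \<and> i < a \<and> n < i + b \<and> upE E (i, n - i)}"
    have finU: "finite U" unfolding U_def by (rule finite_subset[of _ "{..n}"]) auto
    have winU: "\<forall>i\<in>U. i \<le> n \<and> i < a \<and> n < i + b" unfolding U_def by auto
    show "mult_inj I ?J ell d n \<or> mult_surj I ?J ell d n"
    proof (cases "card U + (n + d) < a + b")
      case True
      have "mult_inj I ?J ell d n" unfolding mult_inj_def
      proof (intro ballI impI)
        fix f assume f: "f \<in> I \<inter> homog n" and lf: "ell ^ d * f \<in> ?J"
        define phi where "phi i = lk f (i, n - i)" for i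
        have inU: "i \<in> U" if "i \<le> n" "i < a" "n < i + b" "phi i \<noteq> 0" for i
        proof -
          have "(i, n - i) \<in> Poly_Mapping.keys f" using that unfolding phi_def by (simp add: in_keys_iff)
          then have "upE E (i, n - i)" using f memI by blast
          then show ?thesis unfolding U_def using that by simp
        qed
        have eqs: "\<forall>c. c \<le> n + d \<and> c < a \<and> n + d < c + b \<longrightarrow> (\<Sum>i\<in>U. phi i * of_nat (binc d c i)) = 0"
        proof (intro allI impI)
          fix c assume c: "c \<le> n + d \<and> c < a \<and> n + d < c + b"
          have "lk (ell ^ d * f) (c, n + d - c) = 0"
          proof (rule ccontr)
            assume "lk (ell ^ d * f) (c, n + d - c) \<noteq> 0"
            then have "(c, n + d - c) \<in> Poly_Mapping.keys (ell ^ d * f)" by (simp add: in_keys_iff)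
            then show False using lf memJ c by fastforce
          qed
          moreover have "lk (ell ^ d * f) (c, n + d - c) = (\<Sum>i\<le>n. phi i * of_nat (binc d c i))"
            unfolding ell_def coef_lemma[OF IntD2[OF f]] phi_def using c by simp
          moreover have "(\<Sum>i\<le>n. phi i * of_nat (binc d c i)) = (\<Sum>i\<in>U. phi i * of_nat (binc d c i))"
          proof (rule sum.mono_neutral_right)
            show "U \<subseteq> {..n}" unfolding U_def by auto
            show "\<forall>i\<in>{..n} - U. phi i * of_nat (binc d c i) = 0"
            proof
              fix i assume i: "i \<in> {..n} - U"
              show "phi i * of_nat (binc d c i) = 0"
              proof (cases "i < a \<and> n < i + b")
                case True
                then have "phi i = 0" using inU i by blast
                then show ?thesis by simp
              next
                case False
                have "binc d c i = 0"
                proof (cases "i < a")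
                  case True
                  then have "i + b \<le> n" using False by simp
                  then have "d < c - i" using c by arith
                  then show ?thesis unfolding binc_def by (simp add: binomial_eq_0)
                next
                  case False
                  then show ?thesis using c unfolding binc_def by simp
                qed
                then show ?thesis by simp
              qed
            qed
          qed simp
          ultimately show "(\<Sum>i\<in>U. phi i * of_nat (binc d c i)) = 0" by simp
        qed
        have z: "\<forall>i\<in>U. phi i = 0" by (rule inj_core[OF d finU winU True eqs])
        show "f \<in> ?J" unfolding memJ
        proof
          fix k assume k: "k \<in> Poly_Mapping.keys f"
          obtain i j where kij: "k = (i, j)" by (cases k)
          have nz: "lk f (i, j) \<noteq> 0" using k kij by (simp add: in_keys_iff)
          have ij: "i + j = n" using homog_lookup[OF IntD2[OF f] nz] .
          show "a \<le> fst k \<or> b \<le> snd k"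
          proof (rule ccontr)
            assume "\<not> (a \<le> fst k \<or> b \<le> snd k)"
            then have "i < a" "j < b" using kij by auto
            moreover have "phi i \<noteq> 0" using nz ij unfolding phi_def
              by (metis add_diff_cancel_left')
            ultimately have "i \<in> U" using inU ij by simp
            then show False using z \<open>phi i \<noteq> 0\<close> by blast
          qed
        qed
      qed
      then show ?thesis ..
    next
      case False
      define N where "N = n + d"
      define C where "C = {c. c \<le> N \<and> c < a \<and> N < c + b}"
      define M where "M = a + b - 1 - N"
      define W where "W = {i. i \<le> n \<and> i < a \<and> n < i + b}"
      have UW: "card U \<le> card W"
        by (rule card_mono) (auto simp: W_def U_def intro: finite_subset[of _ "{..n}"])
      have aN: "a \<le> N + 1"
      proof (rule ccontr)
        assume "\<not> a \<le> N + 1"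
        have "W \<subseteq> {n + 1 - b..<n + 1}" unfolding W_def by auto
        then have "card W \<le> b" using card_mono[of "{n + 1 - b..<n + 1}" W] by simp
        then show False using UW False \<open>\<not> a \<le> N + 1\<close> unfolding N_def by simp
      qed
      have bN: "b \<le> N + 1"
      proof (rule ccontr)
        assume "\<not> b \<le> N + 1"
        have "W \<subseteq> {..<a}" unfolding W_def by auto
        then have "card W \<le> a" using card_mono[of "{..<a}" W] by simp
        then show False using UW False \<open>\<not> b \<le> N + 1\<close> unfolding N_def by simp
      qed
      have Ceq: "C = {N + 1 - b..<a}" unfolding C_def using aN bN by auto
      have cardC: "card C = M" unfolding Ceq M_def using bN by simp
      have "M \<le> card U" using False unfolding M_def N_def by simp
      then obtain R where R: "R \<subseteq> U" "card R = M" "finite R" by (rule obtain_subset_with_card_n)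
      have injR: "\<forall>\<phi>. (\<forall>c\<in>C. (\<Sum>r\<in>R. of_nat (binc d c r) * \<phi> r) = 0) \<longrightarrow> (\<forall>r\<in>R. \<phi> r = (0::'k))"
      proof (intro allI impI)
        fix \<phi> :: "nat \<Rightarrow> 'k" assume h: "\<forall>c\<in>C. (\<Sum>r\<in>R. of_nat (binc d c r) * \<phi> r) = 0"
        show "\<forall>r\<in>R. \<phi> r = 0"
        proof (cases "R = {}")
          case True then show ?thesis by simp
        next
          case False
          then have "card R > 0" using R(3) by (simp add: card_gt_0_iff)
          then have cardlt: "card R + (n + d) < a + b" using R unfolding M_def N_def by simp
          have winR: "\<forall>i\<in>R. i \<le> n \<and> i < a \<and> n < i + b" using winU R by blast
          have eqsR: "\<forall>c. c \<le> n + d \<and> c < a \<and> n + d < c + b \<longrightarrow> (\<Sum>i\<in>R. \<phi> i * of_nat (binc d c i)) = 0"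
            using h unfolding C_def N_def by (simp add: mult.commute)
          show ?thesis by (rule inj_core[OF d R(3) winR cardlt eqsR])
        qed
      qed
      have finC: "finite C" unfolding Ceq by simp
      have cardRC: "card R = card C" using R cardC by simp
      have "mult_surj I ?J ell d n" unfolding mult_surj_def
      proof (intro ballI)
        fix g assume g: "g \<in> I \<inter> homog (n + d)"
        obtain \<phi> where phi: "\<forall>c\<in>C. (\<Sum>r\<in>R. of_nat (binc d c r) * \<phi> r) = lk g (c, N - c)"
          using square_solve[OF R(3) finC cardRC injR, of "\<lambda>c. lk g (c, N - c)"] by blast
        define f where "f = (\<Sum>r\<in>R. Poly_Mapping.single (r, n - r) (\<phi> r))"
        have fI: "f \<in> I" unfolding f_def E
        proof (rule ideal_gen_sum)
          show "finite R" using R by simp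
          fix r assume "r \<in> R"
          then have "upE E (r, n - r)" using R unfolding U_def by auto
          then show "Poly_Mapping.single (r, n - r) (\<phi> r) \<in> ideal_gen ((\<lambda>(i, j). mono2 i j) ` E)"
            by (rule single_in_mono_ideal)
        qed
        have fh: "f \<in> homog n"
        proof -
          have "Poly_Mapping.keys f \<subseteq> (\<Union>r\<in>R. Poly_Mapping.keys (Poly_Mapping.single (r, n - r) (\<phi> r)))"
            unfolding f_def by (rule keys_sum)
          also have "\<dots> \<subseteq> {(r, n - r) | r. r \<in> R}" by auto
          finally show ?thesis unfolding homog_def using R winU by fastforce
        qed
        have lkf: "lk f (i, n - i) = (if i \<in> R then \<phi> i else 0)" if "i \<le> n" for i
        proof -
          have "lk f (i, n - i) = (\<Sum>r\<in>R. if r = i then \<phi> r else 0)"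
            unfolding f_def lookup_sum
          proof (rule sum.cong)
            fix r assume "r \<in> R"
            then have "r \<le> n" using R winU by blast
            then show "lk (Poly_Mapping.single (r, n - r) (\<phi> r)) (i, n - i) = (if r = i then \<phi> r else 0)"
              using that by (auto simp: lookup_single when_def)
          qed simp
          also have "\<dots> = (if i \<in> R then \<phi> i else 0)" using R by (simp add: sum.delta')
          finally show ?thesis .
        qed
        have coefE: "lk (ell ^ d * f) (c, e) =
            (if c + e = n + d then (\<Sum>i\<le>n. lk f (i, n - i) * of_nat (binc d c i)) else 0)" for c e
          unfolding ell_def by (rule coef_lemma[OF fh])
        have lkl: "lk (ell ^ d * f) (c, N - c) = (\<Sum>r\<in>R. of_nat (binc d c r) * \<phi> r)" if "c \<le> N" for c
        proof -
          have "lk (ell ^ d * f) (c, N - c) = (\<Sum>i\<le>n. lk f (i, n - i) * of_nat (binc d c i))"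
            using coefE that unfolding N_def by simp
          also have "\<dots> = (\<Sum>i\<in>{..n}. if i \<in> R then \<phi> i * of_nat (binc d c i) else 0)"
            by (rule sum.cong) (auto simp: lkf)
          also have "\<dots> = (\<Sum>i\<in>{..n} \<inter> R. \<phi> i * of_nat (binc d c i))"
            by (rule sum.inter_restrict[symmetric]) simp
          also have "{..n} \<inter> R = R" using R winU by blast
          finally show ?thesis by (simp add: mult.commute)
        qed
        show "\<exists>f\<in>I \<inter> homog n. g - ell ^ d * f \<in> ?J"
        proof (rule bexI[of _ f])
          show "g - ell ^ d * f \<in> ?J" unfolding memJ
          proof
            fix k assume k: "k \<in> Poly_Mapping.keys (g - ell ^ d * f)"
            obtain i j where kij: "k = (i, j)" by (cases k)
            have nz: "lk g (i, j) - lk (ell ^ d * f) (i, j) \<noteq> 0"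
              using k kij by (simp add: in_keys_iff lookup_minus)
            have ij: "i + j = N"
            proof (cases "lk g (i, j) = 0")
              case False then show ?thesis using homog_lookup[OF IntD2[OF g]] unfolding N_def by blast
            next
              case True
              then have "lk (ell ^ d * f) (i, j) \<noteq> 0" using nz by simp
              then show ?thesis using coefE[of i j] unfolding N_def by (auto split: if_splits)
            qed
            show "a \<le> fst k \<or> b \<le> snd k"
            proof (rule ccontr)
              assume "\<not> (a \<le> fst k \<or> b \<le> snd k)"
              then have "i < a" "j < b" using kij by auto
              then have iC: "i \<in> C" using ij unfolding C_def by auto
              have jN: "j = N - i" using ij by simp
              have "lk g (i, N - i) = lk (ell ^ d * f) (i, N - i)"
                using phi iC lkl[of i] unfolding C_def by simp
              then show False using nz jN by simp
            qed
          qed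
          show "f \<in> I \<inter> homog n" using fI fh by simp
        qed
      qed
      then show ?thesis ..
    qed
  qed
qed

end
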